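(* Let $G=(V,E)$ be a complete hypergraph with $n:=|V|$, let $J\subseteq V$, and let $j\notin V$. Then: (i) replacing, in the expression $\ell_n(J,V\setminus J)$, each variable $z_p$ ($p\in\{\emptyset\}\cup V\cup E$, where $p\in V$ means the singleton $\{p\}$) by $z_{p\cup\{j\}}$ yields exactly $\ell_{n+1}(J\cup\{j\},V\setminus J)$; (ii) replacing each such $z_p$ by $z_p-z_{p\cup\{j\}}$ yields exactly $\ell_{n+1}(J,(V\cup\{j\})\setminus J)$. Consequently the inequality $\ell_n(J,V\setminus J)\ge0$ becomes $\ell_{n+1}(J\cup\{j\},V\setminus J)\ge0$ under (i), and $\ell_{n+1}(J,(V\cup\{j\})\setminus J)\ge0$ under (ii).
   Context: A hypergraph $G=(V,E)$ is complete if $E$ consists of all subsets of $V$ of cardinality at least two. Variables are indexed by subsets $S$ of $V\cup\{j\}$: $z_\emptyset:=1$, $z_{\{k\}}=z_k$, and $z_S$ for $|S|\ge2$. For disjoint $J_1,J_2$ with $|J_1\cup J_2|=d$, $\ell_d(J_1,J_2):=\sum_{t\subseteq J_2}(-1)^{|t|}z_{J_1\cup t}$. *)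

theory Defs
  imports Complex_Main
begin

text \<open>A linear expression in the variables z_S is represented as a function of the
  variable assignment z :: 'a set \<Rightarrow> real (z applied to the empty set plays the
  role of z_\<emptyset>). Substituting variables = precomposing the assignment.
  ell J1 J2 z is the value of l_d(J1,J2) with d = card (J1 \<union> J2).\<close>

definition ell :: "'a set \<Rightarrow> 'a set \<Rightarrow> ('a set \<Rightarrow> real) \<Rightarrow> real" where
  "ell J1 J2 z = (\<Sum>t\<in>Pow J2. (-1) ^ card t * z (J1 \<union> t))"

definition complete_hypergraph :: "'a set \<Rightarrow> 'a set set \<Rightarrow> bool" where
  "complete_hypergraph V E \<longleftrightarrow> finite V \<and> E = {S. S \<subseteq> V \<and> card S \<ge> 2}"

end

theory Submission
  imports Defs
begin

lemma ell_insert: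
  fixes z :: "'a set \<Rightarrow> real"
  assumes "finite A" "j \<notin> A" "j \<notin> J"
  shows "ell J (insert j A) z = ell J A (\<lambda>p. z p - z (p \<union> {j}))"
proof -
  have inj: "inj_on (insert j) (Pow A)"
    unfolding inj_on_def using assms(2) by (auto simp: insert_ident)
  have disj: "Pow A \<inter> insert j ` Pow A = {}" using assms(2) by auto
  have fin: "finite (Pow A)" using assms(1) by simp
  have "ell J (insert j A) z = (\<Sum>t\<in>Pow A. (-1) ^ card t * z (J \<union> t))
      + (\<Sum>t\<in>insert j ` Pow A. (-1) ^ card t * z (J \<union> t))"
    unfolding ell_def Pow_insert
    by (rule sum.union_disjoint) (use fin disj in auto)
  also have "(\<Sum>t\<in>insert j ` Pow A. (-1) ^ card t * z (J \<union> t))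
      = (\<Sum>t\<in>Pow A. (-1) ^ card (insert j t) * z (J \<union> insert j t))"
    by (subst sum.reindex[OF inj]) simp
  also have "\<dots> = (\<Sum>t\<in>Pow A. - ((-1) ^ card t * z ((J \<union> t) \<union> {j})))"
  proof (rule sum.cong)
    fix t assume "t \<in> Pow A"
    then have "finite t" "j \<notin> t" using assms(1,2) finite_subset by auto
    then show "(-1) ^ card (insert j t) * z (J \<union> insert j t) = - ((-1) ^ card t * z ((J \<union> t) \<union> {j}))"
      by (simp add: Un_insert_right)
  qed simp
  finally show ?thesis unfolding ell_def
    by (simp add: sum_negf[symmetric] sum.distrib[symmetric] algebra_simps sum_subtractf[symmetric])
qed

theorem lemma5:
  fixes V J :: "'a set" and E :: "'a set set" and j :: 'a
  assumes "complete_hypergraph V E" and "J \<subseteq> V" and "j \<notin> V"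
  shows "(\<forall>z :: 'a set \<Rightarrow> real.
            ell J (V - J) (\<lambda>p. z (p \<union> {j})) = ell (J \<union> {j}) (V - J) z
          \<and> ell J (V - J) (\<lambda>p. z p - z (p \<union> {j})) = ell J ((V \<union> {j}) - J) z
          \<and> (ell J (V - J) (\<lambda>p. z (p \<union> {j})) \<ge> 0 \<longleftrightarrow> ell (J \<union> {j}) (V - J) z \<ge> 0)
          \<and> (ell J (V - J) (\<lambda>p. z p - z (p \<union> {j})) \<ge> 0 \<longleftrightarrow> ell J ((V \<union> {j}) - J) z \<ge> 0))"
proof -
  have finV: "finite V" using assms(1) by (simp add: complete_hypergraph_def)
  have e: "(V \<union> {j}) - J = insert j (V - J)" using assms(2,3) by auto
  have 1: "ell J (V - J) (\<lambda>p. z (p \<union> {j})) = ell (J \<union> {j}) (V - J) z" for z :: "'a set \<Rightarrow> real"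
    unfolding ell_def by (intro sum.cong refl) (simp add: Un_ac)
  have 2: "ell J (V - J) (\<lambda>p. z p - z (p \<union> {j})) = ell J ((V \<union> {j}) - J) z" for z :: "'a set \<Rightarrow> real"
  proof -
    have "j \<notin> J" using assms(2,3) by blast
    then show ?thesis unfolding e using ell_insert[of "V - J" j J z] finV assms(3) by simp
  qed
  show ?thesis using 1 2 by simp
qed

end
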